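(* Let $f:\mathbb P(V_F)\dashrightarrow\mathbb P(V_G)$ be a quadro-quadric Cremona transformation with inverse $g$. Let $E_f\subset R_f$ and $E_g\subset R_g$ be projective subspaces. The following are equivalent: \begin{enumerate} \item $E_f$ and $E_g$ are corresponding radical ideals for $f$ and $g$ respectively; \item $df(E_f)\subset E_g$ and $dg(E_g)\subset E_f$. \end{enumerate}
   Context: $V_F$ and $V_G$ are $n$-dimensional vector spaces. $F:V_F\to V_G$ and $G:V_G\to V_F$ are quadratic lifts of $f$ and $g$, with cubic forms $N,M$ such that $G(F(x))=N(x)x$ and $F(G(y))=M(y)y$. Put $j_f=F/N:V_F\dashrightarrow V_G$ and $j_g=G/M$. The radical of $f$ is $R_f=V(d^2N)\subset\mathbb P(V_F)$, and similarly $R_g=V(d^2M)$. For a projective subspace $A_f$ denote by $A_F$ its affine cone. A pair of projective subspaces $(I_f,I_g)$ is an ideal (and $I_f,I_g$ are called corresponding ideals) if, for generic $x\in V_F$ and $y\in V_G$, \[ j_f(x+I_F)-j_f(x)\subset I_G\quad\text{and}\quad j_g(y+I_G)-j_g(y)\subset I_F. \] It is radical if $I_f\subset R_f$ (equivalently $I_g\subset R_g$). For a projective subspace $E_f\subset\mathbb P(V_F)$, $df(E_f)$ is the projectivization of the span of $\{F(x+e)-F(x)-F(e): x\in V_F,\ e\in E_F\}$ (empty if this is $0$); $dg$ is defined similarly. *)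

theory Defs
  imports "HOL-Analysis.Analysis"
begin

text \<open>Vector spaces V_F, V_G are modelled as complex^'n (same finite index type, so
  both have dimension n = CARD('n)). Projective subspaces are represented by their
  affine cones, i.e. complex linear subspaces (vec.subspace); the empty projective
  subspace corresponds to the zero subspace.\<close>

type_synonym 'n cvec = "complex ^ 'n"

definition quadratic_map :: "('n::finite cvec \<Rightarrow> 'n cvec) \<Rightarrow> bool" where
  "quadratic_map F \<longleftrightarrow> (\<exists>c :: 'n \<Rightarrow> 'n \<Rightarrow> 'n \<Rightarrow> complex.
     \<forall>x. F x = (\<chi> i. \<Sum>j\<in>UNIV. \<Sum>k\<in>UNIV. c i j k * x$j * x$k))"

definition cubic_form :: "('n::finite cvec \<Rightarrow> complex) \<Rightarrow> bool" where
  "cubic_form N \<longleftrightarrow> (\<exists>c :: 'n \<Rightarrow> 'n \<Rightarrow> 'n \<Rightarrow> complex.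
     \<forall>x. N x = (\<Sum>i\<in>UNIV. \<Sum>j\<in>UNIV. \<Sum>k\<in>UNIV. c i j k * x$i * x$j * x$k))"

text \<open>The components of the quadratic map F have no non-constant common factor
  (so that F is a genuine lift of a degree 2 map): no common linear factor and no
  common quadratic factor.\<close>
definition no_common_factor :: "('n::finite cvec \<Rightarrow> 'n cvec) \<Rightarrow> bool" where
  "no_common_factor F \<longleftrightarrow>
     \<not> (\<exists>(a::'n cvec) (B::complex^'n^'n). a \<noteq> 0 \<and>
            (\<forall>x. F x = (\<Sum>i\<in>UNIV. a$i * x$i) *s (B *v x))) \<and>
     \<not> (\<exists>(d::'n cvec \<Rightarrow> complex) (v::'n cvec). v \<noteq> 0 \<and> (\<forall>x. F x = d x *s v))"

text \<open>Quadro-quadric Cremona transformation f with inverse g, given by quadratic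
  lifts F, G and cubic forms N, M with G(F x) = N(x) x and F(G y) = M(y) y.\<close>
definition quadro_quadric_cremona ::
  "('n::finite cvec \<Rightarrow> 'n cvec) \<Rightarrow> ('n cvec \<Rightarrow> 'n cvec) \<Rightarrow>
   ('n cvec \<Rightarrow> complex) \<Rightarrow> ('n cvec \<Rightarrow> complex) \<Rightarrow> bool" where
  "quadro_quadric_cremona F G N M \<longleftrightarrow>
     quadratic_map F \<and> quadratic_map G \<and> cubic_form N \<and> cubic_form M \<and>
     no_common_factor F \<and> no_common_factor G \<and>
     (\<exists>x. N x \<noteq> 0) \<and> (\<exists>y. M y \<noteq> 0) \<and>
     (\<forall>x. G (F x) = N x *s x) \<and> (\<forall>y. F (G y) = M y *s y)"

inductive_set poly_fun :: "('n::finite cvec \<Rightarrow> complex) set" where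
  const: "(\<lambda>x. c) \<in> poly_fun"
| coord: "(\<lambda>x. x $ i) \<in> poly_fun"
| add: "p \<in> poly_fun \<Longrightarrow> q \<in> poly_fun \<Longrightarrow> (\<lambda>x. p x + q x) \<in> poly_fun"
| mult: "p \<in> poly_fun \<Longrightarrow> q \<in> poly_fun \<Longrightarrow> (\<lambda>x. p x * q x) \<in> poly_fun"

definition generic :: "('n::finite cvec \<Rightarrow> bool) \<Rightarrow> bool" where
  "generic P \<longleftrightarrow> (\<exists>p\<in>poly_fun. (\<exists>x. p x \<noteq> 0) \<and> (\<forall>x. p x \<noteq> 0 \<longrightarrow> P x))"

text \<open>Second differential of a cubic form N at x, in directions h, k (up to the
  irrelevant factor 6): the full polarization of N.\<close>
definition d2 :: "('n::finite cvec \<Rightarrow> complex) \<Rightarrow> 'n cvec \<Rightarrow> 'n cvec \<Rightarrow> 'n cvec \<Rightarrow> complex" where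
  "d2 N x h k = N (x + h + k) - N (x + h) - N (x + k) - N (h + k) + N x + N h + N k"

text \<open>Affine cone of the radical R_f = V(d^2 N).\<close>
definition radical_cone :: "('n::finite cvec \<Rightarrow> complex) \<Rightarrow> 'n cvec set" where
  "radical_cone N = {x. \<forall>h k. d2 N x h k = 0}"

definition jmap :: "('n::finite cvec \<Rightarrow> 'n cvec) \<Rightarrow> ('n cvec \<Rightarrow> complex) \<Rightarrow> 'n cvec \<Rightarrow> 'n cvec" where
  "jmap F N x = inverse (N x) *s F x"

definition ideal_cond ::
  "('n::finite cvec \<Rightarrow> 'n cvec) \<Rightarrow> ('n cvec \<Rightarrow> complex) \<Rightarrow> 'n cvec set \<Rightarrow> 'n cvec set \<Rightarrow> bool" where
  "ideal_cond F N I J \<longleftrightarrow>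
     generic (\<lambda>x. \<forall>e\<in>I. N x \<noteq> 0 \<longrightarrow> N (x + e) \<noteq> 0 \<longrightarrow> jmap F N (x + e) - jmap F N x \<in> J)"

definition is_ideal_pair ::
  "('n::finite cvec \<Rightarrow> 'n cvec) \<Rightarrow> ('n cvec \<Rightarrow> 'n cvec) \<Rightarrow>
   ('n cvec \<Rightarrow> complex) \<Rightarrow> ('n cvec \<Rightarrow> complex) \<Rightarrow> 'n cvec set \<Rightarrow> 'n cvec set \<Rightarrow> bool" where
  "is_ideal_pair F G N M IF IG \<longleftrightarrow>
     vec.subspace IF \<and> vec.subspace IG \<and> ideal_cond F N IF IG \<and> ideal_cond G M IG IF"

definition is_radical_ideal_pair ::
  "('n::finite cvec \<Rightarrow> 'n cvec) \<Rightarrow> ('n cvec \<Rightarrow> 'n cvec) \<Rightarrow>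
   ('n cvec \<Rightarrow> complex) \<Rightarrow> ('n cvec \<Rightarrow> complex) \<Rightarrow> 'n cvec set \<Rightarrow> 'n cvec set \<Rightarrow> bool" where
  "is_radical_ideal_pair F G N M IF IG \<longleftrightarrow>
     is_ideal_pair F G N M IF IG \<and> IF \<subseteq> radical_cone N \<and> IG \<subseteq> radical_cone M"

text \<open>Affine cone of df(E_f): span of F(x+e) - F(x) - F(e).\<close>
definition dcone :: "('n::finite cvec \<Rightarrow> 'n cvec) \<Rightarrow> 'n cvec set \<Rightarrow> 'n cvec set" where
  "dcone F E = vec.span {F (x + e) - F x - F e | x e. e \<in> E}"

end

theory Submission imports Defs begin
lemma quad_B_lin:
  fixes c :: "'n::finite \<Rightarrow> 'n \<Rightarrow> 'n \<Rightarrow> complex"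
  assumes Fd: "\<forall>x. F x = (\<chi> i. \<Sum>j\<in>UNIV. \<Sum>k\<in>UNIV. c i j k * x$j * x$k)"
  shows "F (x + t *s w + e) - F (x + t *s w) - F e = (F (x+e) - F x - F e) + t *s (F (w+e) - F w - F e)"
  unfolding vec_eq_iff
  apply (simp add: Fd sum_subtractf[symmetric] sum.distrib[symmetric] sum_distrib_left)
  apply (intro allI sum.cong refl)
  apply (simp add: algebra_simps)
  done
lemma quad_hom:
  fixes c :: "'n::finite \<Rightarrow> 'n \<Rightarrow> 'n \<Rightarrow> complex" and x :: "'n cvec"
  assumes Fd: "\<forall>x. F x = (\<chi> i. \<Sum>j\<in>UNIV. \<Sum>k\<in>UNIV. c i j k * x$j * x$k)"
  shows "F (a *s x) = (a*a) *s F x"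
proof -
  have "(\<Sum>j\<in>UNIV. \<Sum>k\<in>UNIV. c i j k * (a * x $ j) * (a * x $ k)) =
         a * a * (\<Sum>j\<in>UNIV. \<Sum>k\<in>UNIV. c i j k * x $ j * x $ k)" for i
    unfolding sum_distrib_left by (intro sum.cong refl) (simp add: algebra_simps)
  then show ?thesis unfolding vec_eq_iff by (simp add: Fd)
qed
lemma quad0:
  assumes Fd: "\<forall>x. F x = (\<chi> i. \<Sum>j\<in>UNIV. \<Sum>k\<in>UNIV. c i j k * (x::'n::finite cvec)$j * x$k)"
  shows "F 0 = 0"
  unfolding vec_eq_iff by (simp add: Fd)
lemma cubic_shift:
  assumes Nd: "\<forall>x. N x = (\<Sum>i\<in>UNIV. \<Sum>j\<in>UNIV. \<Sum>k\<in>UNIV. c i j k * (x::'n::finite cvec)$i * x$j * x$k)"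
  shows "6 * (N (x + e) - N x) = 3 * d2 N e x x + 3 * d2 N e e x + d2 N e e e"
  unfolding d2_def
  apply (simp add: Nd sum_subtractf[symmetric] sum.distrib[symmetric] sum_distrib_left)
  apply (intro sum.cong refl)
  apply (simp add: algebra_simps)
  done

lemma pf_sum: "finite A \<Longrightarrow> (\<forall>a\<in>A. f a \<in> poly_fun) \<Longrightarrow> (\<lambda>x. \<Sum>a\<in>A. f a x) \<in> poly_fun"
proof (induction A rule: finite_induct)
  case empty then show ?case using poly_fun.const[of 0] by simp
next
  case (insert a A) then show ?case using poly_fun.add[of "f a" "\<lambda>x. \<Sum>a\<in>A. f a x"] by simp
qed

lemma cubic_poly_fun:
  assumes Nd: "\<forall>x. N x = (\<Sum>i\<in>UNIV. \<Sum>j\<in>UNIV. \<Sum>k\<in>UNIV. c i j k * (x::'n::finite cvec)$i * x$j * x$k)"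
  shows "N \<in> poly_fun"
proof -
  have "(\<lambda>x. \<Sum>i\<in>UNIV. \<Sum>j\<in>UNIV. \<Sum>k\<in>UNIV. c i j k * (x::'n cvec)$i * x$j * x$k) \<in> poly_fun"
    by (intro pf_sum ballI poly_fun.mult poly_fun.const poly_fun.coord) auto
  moreover have "N = (\<lambda>x. \<Sum>i\<in>UNIV. \<Sum>j\<in>UNIV. \<Sum>k\<in>UNIV. c i j k * (x::'n cvec)$i * x$j * x$k)"
    using Nd by auto
  ultimately show ?thesis by simp
qed

lemma poly_line: "p \<in> poly_fun \<Longrightarrow> \<exists>q. \<forall>t. p (a + t *s w) = poly q t"
proof (induction p rule: poly_fun.induct)
  case (const c) then show ?case by (intro exI[of _ "[:c:]"]) simp
next
  case (coord i) then show ?case by (intro exI[of _ "[:a$i, w$i:]"]) (simp add: algebra_simps)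
next
  case (add p q)
  then obtain q1 q2 where "\<forall>t. p (a + t *s w) = poly q1 t" "\<forall>t. q (a + t *s w) = poly q2 t" by blast
  then show ?case by (intro exI[of _ "q1+q2"]) simp
next
  case (mult p q)
  then obtain q1 q2 where "\<forall>t. p (a + t *s w) = poly q1 t" "\<forall>t. q (a + t *s w) = poly q2 t" by blast
  then show ?case by (intro exI[of _ "q1*q2"]) simp
qed

lemma cofinite_nonzero:
  assumes "p \<in> poly_fun" "p a \<noteq> 0"
  shows "finite {t. p (a + t *s w) = 0}"
proof -
  obtain q where q: "\<forall>t. p (a + t *s w) = poly q t" using poly_line[OF assms(1)] by blast
  have "poly q 0 \<noteq> 0" using q[rule_format, of 0] assms(2) by simp
  then have "q \<noteq> 0" by auto
  then show ?thesis using poly_roots_finite[of q] q by simp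
qed

lemma two_nonzero:
  assumes "p \<in> poly_fun" "p a \<noteq> 0" "q \<in> poly_fun" "q b \<noteq> 0"
  shows "\<exists>y. p y \<noteq> 0 \<and> q y \<noteq> 0"
proof -
  have f1: "finite {t. p (a + t *s (b - a)) = 0}" by (rule cofinite_nonzero[OF assms(1,2)])
  have "finite {t. q (b + t *s (a - b)) = 0}" by (rule cofinite_nonzero[OF assms(3,4)])
  then have "finite ((\<lambda>t. 1 - t) ` {t. q (b + t *s (a - b)) = 0})" by simp
  moreover have "{t. q (a + t *s (b - a)) = 0} \<subseteq> (\<lambda>t. 1 - t) ` {t. q (b + t *s (a - b)) = 0}"
  proof
    fix t assume "t \<in> {t. q (a + t *s (b - a)) = 0}"
    moreover have "a + t *s (b - a) = b + (1 - t) *s (a - b)" by (simp add: algebra_simps vec_eq_iff)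
    ultimately show "t \<in> (\<lambda>t. 1 - t) ` {t. q (b + t *s (a - b)) = 0}"
      by (intro image_eqI[of _ _ "1 - t"]) auto
  qed
  ultimately have f2: "finite {t. q (a + t *s (b - a)) = 0}" by (rule finite_subset[rotated])
  have "infinite (UNIV :: complex set)" by (rule infinite_UNIV_char_0)
  then have "UNIV - ({t. p (a + t *s (b - a)) = 0} \<union> {t. q (a + t *s (b - a)) = 0}) \<noteq> {}"
    using f1 f2 by (metis Diff_empty Diff_eq_empty_iff finite_Un finite_subset)
  then obtain t where "p (a + t *s (b - a)) \<noteq> 0" "q (a + t *s (b - a)) \<noteq> 0" by blast
  then show ?thesis by blast
qed

lemma zariski_affine:
  assumes R: "R \<in> poly_fun" "R y \<noteq> 0" and S: "vec.subspace S"
    and H: "\<forall>x. R x \<noteq> 0 \<longrightarrow> A x \<in> S"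
    and L: "\<forall>x w t. A (x + t *s w) = A x + t *s L w"
  shows "A z \<in> S"
proof -
  let ?w = "z - y"
  have fin: "finite {t. R (y + t *s ?w) = 0}" by (rule cofinite_nonzero[OF R])
  have "infinite (UNIV :: complex set)" by (rule infinite_UNIV_char_0)
  then have "UNIV - ({t. R (y + t *s ?w) = 0} \<union> {0}) \<noteq> {}"
    using fin by (metis Diff_empty Diff_eq_empty_iff finite_Un finite_subset finite.emptyI finite_insert)
  then obtain t where t: "R (y + t *s ?w) \<noteq> 0" "t \<noteq> 0" by blast
  have Ay: "A y \<in> S" using H R(2) by blast
  have "A y + t *s L ?w \<in> S" using H t(1) L by metis
  then have "t *s L ?w \<in> S" using Ay S vec.subspace_diff by fastforce
  then have "inverse t *s (t *s L ?w) \<in> S" using S vec.subspace_scale by blast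
  then have "L ?w \<in> S" using t(2) by (simp add: vector_smult_assoc)
  then have "A y + 1 *s L ?w \<in> S" using Ay S vec.subspace_add by fastforce
  moreover have "A z = A y + 1 *s L ?w" using L[rule_format, of y 1 ?w] by simp
  ultimately show ?thesis by simp
qed

theorem proposition5p12:
  fixes F G :: "'n::finite cvec \<Rightarrow> 'n cvec"
    and N M :: "'n cvec \<Rightarrow> complex"
    and EF EG :: "'n cvec set"
  assumes "quadro_quadric_cremona F G N M"
    and "vec.subspace EF" and "vec.subspace EG"
    and "EF \<subseteq> radical_cone N" and "EG \<subseteq> radical_cone M"
  shows "is_radical_ideal_pair F G N M EF EG \<longleftrightarrow> (dcone F EF \<subseteq> EG \<and> dcone G EG \<subseteq> EF)"
proof -
  have key: "ideal_cond F N EF EG \<longleftrightarrow> dcone F EF \<subseteq> EG"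
    if qF: "quadratic_map F" and cN: "cubic_form N" and Nnz: "\<exists>x. N x \<noteq> 0"
      and SF: "vec.subspace EF" and SG: "vec.subspace EG" and rad: "EF \<subseteq> radical_cone N"
    for F :: "'n cvec \<Rightarrow> 'n cvec" and N EF EG
  proof -
    obtain c where Fd: "\<forall>x. F x = (\<chi> i. \<Sum>j\<in>UNIV. \<Sum>k\<in>UNIV. c i j k * x$j * x$k)"
      using qF unfolding quadratic_map_def by blast
    obtain c' where Nd: "\<forall>x. N x = (\<Sum>i\<in>UNIV. \<Sum>j\<in>UNIV. \<Sum>k\<in>UNIV. c' i j k * x$i * x$j * x$k)"
      using cN unfolding cubic_form_def by blast
    have Npf: "N \<in> poly_fun" by (rule cubic_poly_fun[OF Nd])
    have Nsh: "N (x + e) = N x" if "e \<in> EF" for x e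
    proof -
      have "\<forall>h k. d2 N e h k = 0" using rad that unfolding radical_cone_def by blast
      then show ?thesis using cubic_shift[OF Nd, of x e] by simp
    qed
    have F0: "F 0 = 0" by (rule quad0[OF Fd])
    have Fe: "F e = (1/2) *s (F (e + e) - F e - F e)" for e
    proof -
      have ee: "e + e = (2::complex) *s e" by (simp add: vec_eq_iff)
      have "F (e + e) = 4 *s F e" unfolding ee quad_hom[OF Fd] by simp
      then show ?thesis by (simp add: vec_eq_iff)
    qed
    show ?thesis
    proof
      assume ic: "ideal_cond F N EF EG"
      then obtain r where r: "r \<in> poly_fun" "\<exists>x. r x \<noteq> 0"
        and rH: "\<forall>x. r x \<noteq> 0 \<longrightarrow> (\<forall>e\<in>EF. N x \<noteq> 0 \<longrightarrow> N (x + e) \<noteq> 0 \<longrightarrow> jmap F N (x + e) - jmap F N x \<in> EG)"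
        unfolding ideal_cond_def generic_def by blast
      obtain y where y: "r y \<noteq> 0" "N y \<noteq> 0" using two_nonzero[OF r(1) _ Npf] r(2) Nnz by blast
      have Rpf: "(\<lambda>x. r x * N x) \<in> poly_fun" by (rule poly_fun.mult[OF r(1) Npf])
      have A: "F (z + e) - F z \<in> EG" if e: "e \<in> EF" for z e
      proof (rule zariski_affine[where R="\<lambda>x. r x * N x" and y=y and S=EG and A="\<lambda>x. F (x + e) - F x"
            and L="\<lambda>w. F (w + e) - F w - F e"])
        show "(\<lambda>x. r x * N x) \<in> poly_fun" by (rule Rpf)
        show "r y * N y \<noteq> 0" using y by simp
        show "vec.subspace EG" by (rule SG)
        show "\<forall>x. r x * N x \<noteq> 0 \<longrightarrow> F (x + e) - F x \<in> EG"
        proof (intro allI impI)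
          fix x assume "r x * N x \<noteq> 0"
          then have rx: "r x \<noteq> 0" and Nx: "N x \<noteq> 0" by auto
          have "jmap F N (x + e) - jmap F N x \<in> EG" using rH rx Nx Nsh[OF e, of x] e by auto
          then have "inverse (N x) *s (F (x + e) - F x) \<in> EG"
            unfolding jmap_def Nsh[OF e] by (simp add: vector_ssub_ldistrib)
          then have "N x *s (inverse (N x) *s (F (x + e) - F x)) \<in> EG" using SG vec.subspace_scale by blast
          then show "F (x + e) - F x \<in> EG" using Nx by (simp add: vector_smult_assoc)
        qed
        show "\<forall>x w t. F (x + t *s w + e) - F (x + t *s w) = F (x + e) - F x + t *s (F (w + e) - F w - F e)"
        proof (intro allI)
          fix x w t
          have h: "F (x + t *s w + e) - F (x + t *s w) - F e = (F (x+e) - F x - F e) + t *s (F (w+e) - F w - F e)"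
            by (rule quad_B_lin[OF Fd])
          have "F (x + t *s w + e) - F (x + t *s w) = (F (x + t *s w + e) - F (x + t *s w) - F e) + F e" by simp
          also have "\<dots> = F (x + e) - F x + t *s (F (w + e) - F w - F e)" unfolding h by (simp add: algebra_simps)
          finally show "F (x + t *s w + e) - F (x + t *s w) = F (x + e) - F x + t *s (F (w + e) - F w - F e)" .
        qed
      qed
      have "{F (x + e) - F x - F e | x e. e \<in> EF} \<subseteq> EG"
      proof clarify
        fix x e assume e: "e \<in> EF"
        have "F e \<in> EG" using A[OF e, of 0] F0 by simp
        then show "F (x + e) - F x - F e \<in> EG" using A[OF e, of x] SG vec.subspace_diff by blast
      qed
      then show "dcone F EF \<subseteq> EG" unfolding dcone_def using SG vec.span_minimal by blast
    next
      assume dc: "dcone F EF \<subseteq> EG"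
      have inG: "F (x + e) - F x - F e \<in> EG" if "e \<in> EF" for x e
        using dc that unfolding dcone_def by (blast intro: vec.span_base)
      show "ideal_cond F N EF EG"
        unfolding ideal_cond_def generic_def
      proof (intro bexI[OF _ Npf] conjI Nnz allI impI ballI)
        fix x e assume Nx: "N x \<noteq> 0" and e: "e \<in> EF"
        have "F e \<in> EG" using inG[OF e, of e] Fe[of e] SG vec.subspace_scale by metis
        then have "F (x + e) - F x \<in> EG" using inG[OF e, of x] SG vec.subspace_add by fastforce
        then have "inverse (N x) *s (F (x + e) - F x) \<in> EG" using SG vec.subspace_scale by blast
        then show "jmap F N (x + e) - jmap F N x \<in> EG"
          unfolding jmap_def Nsh[OF e] by (simp add: vector_ssub_ldistrib)
      qed
    qed
  qed
  from assms(1) have h: "quadratic_map F" "quadratic_map G" "cubic_form N" "cubic_form M"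
    "\<exists>x. N x \<noteq> 0" "\<exists>y. M y \<noteq> 0" unfolding quadro_quadric_cremona_def by auto
  show ?thesis
    unfolding is_radical_ideal_pair_def is_ideal_pair_def
    using key[OF h(1,3,5) assms(2,3,4)] key[OF h(2,4,6) assms(3,2,5)] assms by blast
qed
end
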